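(* Fix $\varepsilon>0$, $\beta\in(0,1)$, an even integer $d>4(e^{2\varepsilon}-1)^2\ln\frac{2}{\beta}$, and an $\varepsilon$-private randomizer $R:[d]\to\mathcal Y$. For every message $y\in\mathcal Y$, if $H$ is chosen uniformly at random among subsets of $[d]$ of size $d/2$, then \[ \Pr_H\left[y \text{ is not } (e^{2\varepsilon}-1)\sqrt{\tfrac{4}{d}\ln\tfrac{2}{\beta}}\text{-leaky with respect to } H,R\right]\ge 1-\beta . \]
   Context: A randomizer $R:[d]\to\mathcal Y$ is a randomized map into a countable message set $\mathcal Y$; it is $\varepsilon$-private if for all $x,x'\in[d]$ and all $Y\subseteq\mathcal Y$, $\Pr[R(x)\in Y]\le e^{\varepsilon}\Pr[R(x')\in Y]$. $\mathbf U$ is the uniform distribution on $[d]$; for $H\subseteq[d]$, $\mathbf U_H$ is the uniform distribution on $H$; $R(\mathbf U)$ (resp. $R(\mathbf U_H)$) is the distribution of $R(\hat x)$ where $\hat x\sim\mathbf U$ (resp. $\hat x\sim \mathbf U_H$). For $H\subset[d]$ with $|H|=d/2$, a message $y$ is $v$-leaky with respect to $H,R$ if $\left|\ln\frac{\Pr[R(\mathbf U_H)=y]}{\Pr[R(\mathbf U)=y]}\right|>v$ (messages with $\Pr[R(\mathbf U)=y]=0$ are regarded as not leaky). *)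

theory Defs
  imports "HOL-Probability.Probability"
begin

text \<open>A randomizer on [d] = {1..d} is modelled as a map from inputs to
  probability mass functions on a countable message type 'y.\<close>

definition eps_private :: "real \<Rightarrow> nat \<Rightarrow> (nat \<Rightarrow> 'y::countable pmf) \<Rightarrow> bool" where
  "eps_private \<epsilon> d R \<longleftrightarrow>
     (\<forall>x\<in>{1..d}. \<forall>x'\<in>{1..d}. \<forall>Y. measure_pmf.prob (R x) Y \<le> exp \<epsilon> * measure_pmf.prob (R x') Y)"

text \<open>Pr[R(U_H) = y] where U_H is uniform on H (R(U) is the case H = [d]).\<close>
definition prob_out :: "(nat \<Rightarrow> 'y pmf) \<Rightarrow> nat set \<Rightarrow> 'y \<Rightarrow> real" where
  "prob_out R H y = measure_pmf.prob (bind_pmf (pmf_of_set H) R) {y}"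

text \<open>y is v-leaky w.r.t. H, R. Messages with Pr[R(U)=y]=0 are not leaky;
  if Pr[R(U_H)=y]=0 < Pr[R(U)=y] the log-ratio is -infinity, hence leaky.\<close>
definition leaky :: "real \<Rightarrow> nat \<Rightarrow> nat set \<Rightarrow> (nat \<Rightarrow> 'y pmf) \<Rightarrow> 'y \<Rightarrow> bool" where
  "leaky v d H R y \<longleftrightarrow>
     prob_out R {1..d} y > 0 \<and>
     (prob_out R H y = 0 \<or> \<bar>ln (prob_out R H y / prob_out R {1..d} y)\<bar> > v)"

end

theory Submission
  imports Defs
begin


lemma two_point_aux:
  fixes u w c t :: real assumes "t \<ge> 0" "w \<le> u" "u - w \<le> c"
  shows "exp(t * u) + exp(t * w) \<le> 2  *  exp(t * (u+w)/2 + t^2 * c^2/8)"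
proof -
  define h where "h = t * (u-w)"
  have h0: "h \<ge> 0" using assms by (simp add: h_def)
  have "-h * (1/2) + ln (1 + (1/2)  *  (exp h - 1)) \<le> h^2/8"
    using Hoeffdings_lemma_aux[of h "1/2"] h0 by simp
  hence "ln ((1 + exp h)/2) \<le> h/2 + h^2/8" by (simp add: field_simps)
  hence "(1 + exp h)/2 \<le> exp (h/2 + h^2/8)"
    by (metis add_pos_pos exp_gt_zero exp_le_cancel_iff exp_ln half_gt_zero zero_less_one)
  moreover have "h^2 \<le> (t * c)^2" unfolding h_def using assms
    by (intro power_mono mult_left_mono) auto
  hence "exp (h/2 + h^2/8) \<le> exp (h/2 + t^2 * c^2/8)" by (simp add: power_mult_distrib)
  ultimately have 1: "(1 + exp h)/2 \<le> exp (h/2 + t^2 * c^2/8)"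
    by linarith
  have eqh: "t * w + h/2 = t * (u+w)/2" by (simp add: h_def field_simps)
  have "exp(t * u) + exp(t * w) = exp(t * w)  *  (1 + exp h)"
    by (simp add: h_def algebra_simps flip: exp_add)
  also have "\<dots> \<le> exp(t * w)  *  (2  *  exp (h/2 + t^2 * c^2/8))"
    using 1 by (intro mult_left_mono) auto
  also have "\<dots> = 2  *  exp(t * w + h/2 + t^2 * c^2/8)" by (simp add: exp_add)
  finally show ?thesis using eqh by simp
qed

lemma two_point:
  fixes u w c t :: real assumes "t \<ge> 0" "\<bar>u - w\<bar> \<le> c"
  shows "exp(t * u) + exp(t * w) \<le> 2  *  exp(t * (u+w)/2 + t^2 * c^2/8)"
proof (cases "w \<le> u")
  case True thus ?thesis using two_point_aux[of t w u c] assms by simp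
next
  case False thus ?thesis using two_point_aux[of t u w c] assms by (simp add: add.commute)
qed

lemma perm_transitive:
  assumes "finite D" "H \<subseteq> D" "H' \<subseteq> D" "card H = card H'"
  shows "\<exists>\<sigma>. \<sigma> permutes D \<and> \<sigma> ` H = H'"
proof -
  have fH: "finite H" "finite H'" using assms finite_subset by auto
  obtain f where f: "bij_betw f H H'" using finite_same_card_bij[OF fH assms(4)] by blast
  have "card (D - H) = card (D - H')"
    using assms fH by (simp add: card_Diff_subset)
  then obtain g where g: "bij_betw g (D - H) (D - H')"
    using finite_same_card_bij assms by blast
  define s where "s = (\<lambda>x. if x \<in> H then f x else if x \<in> D then g x else x)"
  have "bij_betw (\<lambda>x. if x \<in> H then f x else g x) (H \<union> (D - H)) (H' \<union> (D - H'))"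
    by (rule bij_betw_disjoint_Un[OF f g]) auto
  also have "H \<union> (D - H) = D" using assms by auto
  also have "H' \<union> (D - H') = D" using assms by auto
  finally have "bij_betw (\<lambda>x. if x \<in> H then f x else g x) D D" .
  hence "bij_betw s D D" by (rule bij_betw_cong[THEN iffD1, rotated]) (auto simp: s_def)
  hence "s permutes D" by (rule bij_imp_permutes) (use assms in \<open>auto simp: s_def\<close>)
  moreover have "s ` H = H'" using f by (auto simp: s_def bij_betw_def image_def)
  ultimately show ?thesis by blast
qed



lemma sym_sum:
  fixes g :: "nat set \<Rightarrow> real"
  assumes "finite D" "H0 \<subseteq> D" "card H0 = k"
  shows "real (card {H. H \<subseteq> D \<and> card H = k}) * (\<Sum>\<sigma>\<in>{\<sigma>. \<sigma> permutes D}. g (\<sigma> ` H0))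
       = fact (card D) * (\<Sum>H\<in>{H. H \<subseteq> D \<and> card H = k}. g H)"
proof -
  define Hs where "Hs = {H. H \<subseteq> D \<and> card H = k}"
  define Ps where "Ps = {\<sigma>. \<sigma> permutes D}"
  have fHs: "finite Hs" unfolding Hs_def using assms(1)
    by (rule finite_subset[rotated, OF finite_Pow_iff[THEN iffD2]]) auto
  have fPs: "finite Ps" unfolding Ps_def using assms(1) by (rule finite_permutations)
  have inv: "(\<Sum>\<sigma>\<in>Ps. g (\<sigma> ` H)) = (\<Sum>\<sigma>\<in>Ps. g (\<sigma> ` H0))" if "H \<in> Hs" for H
  proof -
    have "H \<subseteq> D" "card H = k" using that by (auto simp: Hs_def)
    then obtain \<tau> where \<tau>: "\<tau> permutes D" "\<tau> ` H0 = H"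
      using perm_transitive[of D H0 H] assms by auto
    have "(\<Sum>\<sigma>\<in>Ps. g (\<sigma> ` H0)) = (\<Sum>\<sigma>\<in>Ps. g ((\<sigma> \<circ> \<tau>) ` H0))"
      unfolding Ps_def by (rule sum_permutations_compose_right[OF \<tau>(1)])
    also have "\<dots> = (\<Sum>\<sigma>\<in>Ps. g (\<sigma> ` H))" by (intro sum.cong refl) (metis \<tau>(2) image_comp)
    finally show ?thesis by simp
  qed
  have reind: "(\<Sum>H\<in>Hs. g (\<sigma> ` H)) = (\<Sum>H\<in>Hs. g H)" if "\<sigma> \<in> Ps" for \<sigma>
  proof -
    have p: "\<sigma> permutes D" using that by (simp add: Ps_def)
    have pi: "inv \<sigma> permutes D" using permutes_inv[OF p] .
    have "bij_betw ((`) \<sigma>) Hs Hs"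
    proof (rule bij_betwI[where g = "(`) (inv \<sigma>)"])
      show "(`) \<sigma> \<in> Hs \<rightarrow> Hs"
        using p by (auto simp: Hs_def permutes_in_image card_image permutes_inj_on[OF p] inj_on_subset)
      show "(`) (inv \<sigma>) \<in> Hs \<rightarrow> Hs"
        using pi by (auto simp: Hs_def permutes_in_image card_image permutes_inj_on[OF pi] inj_on_subset)
    qed (auto simp: image_image permutes_inverses[OF p])
    thus ?thesis by (rule sum.reindex_bij_betw)
  qed
  have "(\<Sum>H\<in>Hs. \<Sum>\<sigma>\<in>Ps. g (\<sigma> ` H)) = real (card Hs) * (\<Sum>\<sigma>\<in>Ps. g (\<sigma> ` H0))"
    using inv by simp
  moreover have "(\<Sum>H\<in>Hs. \<Sum>\<sigma>\<in>Ps. g (\<sigma> ` H)) = (\<Sum>\<sigma>\<in>Ps. \<Sum>H\<in>Hs. g (\<sigma> ` H))"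
    by (rule sum.swap)
  moreover have "\<dots> = real (card Ps) * (\<Sum>H\<in>Hs. g H)" using reind by simp
  moreover have "card Ps = fact (card D)" unfolding Ps_def using card_permutations assms(1) by blast
  ultimately show ?thesis unfolding Hs_def Ps_def by simp
qed

lemma sum_pairs: fixes n :: nat and f :: "nat \<Rightarrow> real" shows "(\<Sum>i<n. f (2*i+1) + f (2*i+2)) = (\<Sum>x\<in>{1..2*n}. (f x :: real))"
proof (induction n)
  case 0 then show ?case by simp
next
  case (Suc n)
  have "{1..2*Suc n} = insert (2*n+2) (insert (2*n+1) {1..2*n})" by auto
  then show ?case using Suc by simp
qed



lemma per_sigma:
  fixes b :: "nat \<Rightarrow> real" and n :: nat and t c :: real
  assumes "t \<ge> 0" "\<And>x x'. x \<in> {1..2*n} \<Longrightarrow> x' \<in> {1..2*n} \<Longrightarrow> \<bar>b x - b x'\<bar> \<le> c"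
  shows "(\<Sum>C\<in>Pow {..<n}. exp (t * (\<Sum>x\<in>(\<lambda>i. 2*i+2) ` C \<union> (\<lambda>i. 2*i+1) ` ({..<n} - C). b x)))
     \<le> 2^n * exp (t * (\<Sum>x\<in>{1..2*n}. b x)/2 + n * t^2 * c^2/8)"
proof -
  have split: "(\<Sum>x\<in>(\<lambda>i. 2*i+2) ` C \<union> (\<lambda>i. 2*i+1) ` ({..<n} - C). b x)
      = (\<Sum>i\<in>C. b (2*i+2)) + (\<Sum>i\<in>{..<n} - C. b (2*i+1))" if "C \<in> Pow {..<n}" for C
  proof -
    have fC: "finite C" using that finite_subset by auto
    have "(\<Sum>x\<in>(\<lambda>i. 2*i+2) ` C \<union> (\<lambda>i. 2*i+1) ` ({..<n} - C). b x)
        = (\<Sum>x\<in>(\<lambda>i. 2*i+2) ` C. b x) + (\<Sum>x\<in>(\<lambda>i. 2*i+1) ` ({..<n} - C). b x)"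
    proof (rule sum.union_disjoint)
      have ne: "\<And>i j::nat. 2*i+2 \<noteq> 2*j+1" by presburger
      show "(\<lambda>i. 2*i+2) ` C \<inter> (\<lambda>i. 2*i+1) ` ({..<n} - C) = {}" using ne by blast
    qed (use fC in auto)
    also have "\<dots> = (\<Sum>i\<in>C. b (2*i+2)) + (\<Sum>i\<in>{..<n} - C. b (2*i+1))"
      by (subst sum.reindex, simp add: inj_on_def, subst sum.reindex, simp add: inj_on_def, simp)
    finally show ?thesis .
  qed
  have "(\<Sum>C\<in>Pow {..<n}. exp (t * (\<Sum>x\<in>(\<lambda>i. 2*i+2) ` C \<union> (\<lambda>i. 2*i+1) ` ({..<n} - C). b x)))
     = (\<Sum>C\<in>Pow {..<n}. (\<Prod>i\<in>C. exp (t * b (2*i+2))) * (\<Prod>i\<in>{..<n} - C. exp (t * b (2*i+1))))"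
  proof (rule sum.cong[OF refl])
    fix C assume C: "C \<in> Pow {..<n}"
    have fC: "finite C" using C finite_subset by auto
    show "exp (t * (\<Sum>x\<in>(\<lambda>i. 2*i+2) ` C \<union> (\<lambda>i. 2*i+1) ` ({..<n} - C). b x))
       = (\<Prod>i\<in>C. exp (t * b (2*i+2))) * (\<Prod>i\<in>{..<n} - C. exp (t * b (2*i+1)))"
      unfolding split[OF C] using fC by (simp add: distrib_left sum_distrib_left exp_add exp_sum)
  qed
  also have "\<dots> = (\<Prod>i<n. exp (t * b (2*i+2)) + exp (t * b (2*i+1)))"
    by (rule prod_add[symmetric]) simp
  also have "\<dots> \<le> (\<Prod>i<n. 2 * exp (t * (b (2*i+2) + b (2*i+1))/2 + t^2 * c^2/8))"
  proof (rule prod_mono)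
    fix i assume "i \<in> {..<n}"
    hence "2*i+2 \<in> {1..2*n}" "2*i+1 \<in> {1..2*n}" by auto
    hence "\<bar>b (2*i+2) - b (2*i+1)\<bar> \<le> c" using assms(2) by blast
    thus "0 \<le> exp (t * b (2*i+2)) + exp (t * b (2*i+1)) \<and>
          exp (t * b (2*i+2)) + exp (t * b (2*i+1)) \<le> 2 * exp (t * (b (2*i+2) + b (2*i+1))/2 + t^2 * c^2/8)"
      using two_point[OF assms(1)] by (simp add: add_nonneg_nonneg)
  qed
  also have "\<dots> = 2^n * exp (\<Sum>i<n. t * (b (2*i+2) + b (2*i+1))/2 + t^2 * c^2/8)"
    by (simp add: prod.distrib exp_sum)
  also have "(\<Sum>i<n. t * (b (2*i+2) + b (2*i+1))/2 + t^2 * c^2/8)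
        = t * (\<Sum>i<n. b (2*i+1) + b (2*i+2))/2 + n * t^2 * c^2/8"
    by (simp add: sum.distrib sum_divide_distrib[symmetric] sum_distrib_left[symmetric] add.commute)
  also have "(\<Sum>i<n. b (2*i+1) + b (2*i+2)) = (\<Sum>x\<in>{1..2*n}. b x)" by (rule sum_pairs)
  finally show ?thesis .
qed



lemma mgf_half:
  fixes a :: "nat \<Rightarrow> real" and n :: nat and t c :: real
  assumes t: "t \<ge> 0" and ac: "\<And>x x'. x \<in> {1..2*n} \<Longrightarrow> x' \<in> {1..2*n} \<Longrightarrow> \<bar>a x - a x'\<bar> \<le> c"
  shows "(\<Sum>H\<in>{H. H \<subseteq> {1..2*n} \<and> card H = n}. exp (t * (\<Sum>x\<in>H. a x)))
     \<le> real (card {H. H \<subseteq> {1..2*n} \<and> card H = n}) * exp (t * (\<Sum>x\<in>{1..2*n}. a x)/2 + n * t^2 * c^2/8)"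
proof -
  define D where "D = {1..2*n}"
  define Hs where "Hs = {H. H \<subseteq> D \<and> card H = n}"
  define Ps where "Ps = {\<sigma>. \<sigma> permutes D}"
  define T where "T = (\<lambda>C. (\<lambda>i. 2*i+2) ` C \<union> (\<lambda>i. 2*i+1) ` ({..<n} - C))"
  define g where "g = (\<lambda>H. exp (t * (\<Sum>x\<in>H. a x)))"
  define M where "M = exp (t * (\<Sum>x\<in>D. a x)/2 + n * t^2 * c^2/8)"
  define S where "S = (\<Sum>H\<in>Hs. g H)"
  have fD: "finite D" by (simp add: D_def)
  have cD: "card D = 2*n" by (simp add: D_def)
  have TC: "T C \<subseteq> D \<and> card (T C) = n" if "C \<in> Pow {..<n}" for C
  proof
    show "T C \<subseteq> D" using that by (auto simp: T_def D_def)
    have fC: "finite C" using that finite_subset by auto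
    have ne: "\<And>i j::nat. 2*i+2 \<noteq> 2*j+1" by presburger
    have "card (T C) = card ((\<lambda>i. 2*i+2) ` C) + card ((\<lambda>i. 2*i+1) ` ({..<n} - C))"
      unfolding T_def using fC ne by (intro card_Un_disjoint) auto
    also have "\<dots> = card C + card ({..<n} - C)"
      by (simp add: card_image inj_on_def)
    also have "\<dots> = n" using that fC card_mono[of "{..<n}" C] by (simp add: card_Diff_subset)
    finally show "card (T C) = n" .
  qed
  have eq: "real (card Hs) * (\<Sum>\<sigma>\<in>Ps. g (\<sigma> ` T C)) = fact (2*n) * S" if "C \<in> Pow {..<n}" for C
    using sym_sum[OF fD, of "T C" n g] TC[OF that] by (simp add: Hs_def Ps_def S_def cD)
  have "(\<Sum>C\<in>Pow {..<n}. real (card Hs) * (\<Sum>\<sigma>\<in>Ps. g (\<sigma> ` T C))) = 2^n * (fact (2*n) * S)"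
    using eq by (simp add: card_Pow)
  also have "(\<Sum>C\<in>Pow {..<n}. real (card Hs) * (\<Sum>\<sigma>\<in>Ps. g (\<sigma> ` T C)))
      = real (card Hs) * (\<Sum>\<sigma>\<in>Ps. \<Sum>C\<in>Pow {..<n}. g (\<sigma> ` T C))"
    by (simp add: sum_distrib_left[symmetric] sum.swap[of _ "Pow {..<n}"])
  finally have 1: "real (card Hs) * (\<Sum>\<sigma>\<in>Ps. \<Sum>C\<in>Pow {..<n}. g (\<sigma> ` T C)) = 2^n * (fact (2*n) * S)" .
  have per: "(\<Sum>C\<in>Pow {..<n}. g (\<sigma> ` T C)) \<le> 2^n * M" if "\<sigma> \<in> Ps" for \<sigma>
  proof -
    have p: "\<sigma> permutes D" using that by (simp add: Ps_def)
    have "(\<Sum>C\<in>Pow {..<n}. g (\<sigma> ` T C)) = (\<Sum>C\<in>Pow {..<n}. exp (t * (\<Sum>x\<in>T C. a (\<sigma> x))))"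
    proof (rule sum.cong[OF refl])
      fix C assume "C \<in> Pow {..<n}"
      have "inj_on \<sigma> (T C)" by (rule permutes_inj_on[OF p])
      thus "g (\<sigma> ` T C) = exp (t * (\<Sum>x\<in>T C. a (\<sigma> x)))"
        by (simp add: g_def sum.reindex)
    qed
    also have "\<dots> \<le> 2^n * exp (t * (\<Sum>x\<in>{1..2*n}. a (\<sigma> x))/2 + n * t^2 * c^2/8)"
      unfolding T_def
    proof (rule per_sigma[OF t])
      fix x x' :: nat assume "x \<in> {1..2*n}" "x' \<in> {1..2*n}"
      thus "\<bar>a (\<sigma> x) - a (\<sigma> x')\<bar> \<le> c" using ac permutes_in_image[OF p] unfolding D_def by blast
    qed
    also have "(\<Sum>x\<in>{1..2*n}. a (\<sigma> x)) = (\<Sum>x\<in>D. a x)"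
      unfolding D_def[symmetric] using permutes_imp_bij[OF p] by (rule sum.reindex_bij_betw)
    finally show ?thesis by (simp add: M_def)
  qed
  have "real (card Hs) * (\<Sum>\<sigma>\<in>Ps. \<Sum>C\<in>Pow {..<n}. g (\<sigma> ` T C)) \<le> real (card Hs) * (\<Sum>\<sigma>\<in>Ps. 2^n * M)"
    using per by (intro mult_left_mono sum_mono) auto
  also have "\<dots> = real (card Hs) * (fact (2*n) * 2^n * M)"
    using card_permutations[OF cD fD] by (simp add: Ps_def)
  finally have "2^n * (fact (2*n) * S) \<le> 2^n * fact (2*n) * (real (card Hs) * M)" using 1 by (simp add: algebra_simps)
  hence "S \<le> real (card Hs) * M" by (simp add: mult.assoc)
  thus ?thesis by (simp add: S_def Hs_def g_def M_def D_def)
qed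



lemma tail_half:
  fixes a :: "nat \<Rightarrow> real" and n :: nat and t c s :: real
  assumes t: "t \<ge> 0" and ac: "\<And>x x'. x \<in> {1..2*n} \<Longrightarrow> x' \<in> {1..2*n} \<Longrightarrow> \<bar>a x - a x'\<bar> \<le> c"
  shows "real (card {H. H \<subseteq> {1..2*n} \<and> card H = n \<and> (\<Sum>x\<in>H. a x) \<ge> (\<Sum>x\<in>{1..2*n}. a x)/2 + s})
     \<le> real (card {H. H \<subseteq> {1..2*n} \<and> card H = n}) * exp (n * t^2 * c^2/8 - t * s)"
proof -
  define Hs where "Hs = {H. H \<subseteq> {1..2*n} \<and> card H = n}"
  define X where "X = {H. H \<subseteq> {1..2*n} \<and> card H = n \<and> (\<Sum>x\<in>H. a x) \<ge> (\<Sum>x\<in>{1..2*n}. a x)/2 + s}"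
  define A where "A = (\<Sum>x\<in>{1..2*n}. a x)"
  have fHs: "finite Hs" unfolding Hs_def
    by (rule finite_subset[rotated, OF finite_Pow_iff[THEN iffD2, of "{1..2*n}"]]) auto
  have XH: "X \<subseteq> Hs" by (auto simp: X_def Hs_def)
  have "real (card X) = (\<Sum>H\<in>X. 1)" by simp
  also have "\<dots> \<le> (\<Sum>H\<in>X. exp (t * ((\<Sum>x\<in>H. a x) - A/2 - s)))"
  proof (rule sum_mono)
    fix H assume "H \<in> X"
    hence "t * ((\<Sum>x\<in>H. a x) - A/2 - s) \<ge> 0" using t by (simp add: X_def A_def)
    thus "1 \<le> exp (t * ((\<Sum>x\<in>H. a x) - A/2 - s))" by simp
  qed
  also have "\<dots> \<le> (\<Sum>H\<in>Hs. exp (t * ((\<Sum>x\<in>H. a x) - A/2 - s)))"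
    by (rule sum_mono2[OF fHs XH]) auto
  also have "\<dots> = (\<Sum>H\<in>Hs. exp (t * (\<Sum>x\<in>H. a x))) * exp (- t * (A/2 + s))"
    by (simp add: sum_distrib_right flip: exp_add) (simp add: algebra_simps)
  also have "\<dots> \<le> (real (card Hs) * exp (t * A/2 + n * t^2 * c^2/8)) * exp (- t * (A/2 + s))"
    using mgf_half[OF t ac] by (intro mult_right_mono) (auto simp: Hs_def A_def)
  also have "\<dots> = real (card Hs) * exp (n * t^2 * c^2/8 - t * s)"
    by (simp add: mult.assoc flip: exp_add) (simp add: algebra_simps)
  finally show ?thesis by (simp add: X_def Hs_def)
qed

lemma prob_out_eq:
  assumes "finite H" "H \<noteq> {}"
  shows "prob_out R H y = (\<Sum>x\<in>H. pmf (R x) y) / card H"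
  unfolding prob_out_def measure_pmf_single pmf_bind
  using integral_pmf_of_set[OF assms(2,1)] by simp



lemma ln_bound:
  fixes r \<tau> :: real
  assumes "0 \<le> \<tau>" "\<tau> < 1/2" "\<bar>r - 1\<bar> < \<tau>"
  shows "r > 0 \<and> \<bar>ln r\<bar> \<le> 2 * \<tau>"
proof -
  have r: "r > 1/2" using assms by linarith
  hence rp: "r > 0" by simp
  have "ln r \<le> r - 1" using rp by (rule ln_le_minus_one)
  hence up: "ln r \<le> 2 * \<tau>" using assms by linarith
  have "ln (1/r) \<le> 1/r - 1" using rp by (intro ln_le_minus_one) simp
  hence A: "- ln r \<le> (1 - r)/r" using rp by (simp add: ln_div field_simps)
  have B: "(1 - r)/r \<le> 2 * \<tau>"
  proof (cases "r \<le> 1")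
    case True
    have "(1 - r) * (1 - 2*r) \<le> 0" using True r by (intro mult_nonneg_nonpos) auto
    hence "(1 - r) \<le> 2 * (1 - r) * r" by (simp add: algebra_simps)
    hence "(1 - r)/r \<le> 2 * (1 - r)" using rp by (simp add: divide_le_eq)
    moreover have "2 * (1 - r) \<le> 2 * \<tau>" using assms(3) by auto
    ultimately show ?thesis by (rule order_trans)
  next
    case False
    hence "(1 - r)/r \<le> 0" using rp by (intro divide_nonpos_pos) auto
    thus ?thesis using assms by linarith
  qed
  have "- ln r \<le> 2 * \<tau>" using A B by linarith
  thus ?thesis using up rp by linarith
qed

lemma exponent_bound:
  fixes n :: nat and c P k \<tau> L s lam :: real
  assumes "n > 0" "c > 0" "P > 0" "c \<le> (k - 1) * P" "k > 1" "\<tau> \<ge> 0"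
    and tau2: "\<tau>^2 = (k^2 - 1)^2 * L / (2*n)" and s: "s = n * P * \<tau>" and lam: "lam = 4 * s / (n * c^2)"
  shows "n * lam^2 * c^2/8 - lam * s \<le> - L"
proof -
  have e: "n * lam^2 * c^2/8 - lam * s = - (2 * s^2 / (n * c^2))"
    using assms(1,2) unfolding lam by (simp add: field_simps power2_eq_square)
  have k2: "k^2 - 1 > 0" using less_1_mult[OF assms(5) assms(5)] by (simp add: power2_eq_square)
  have L: "L = 2 * n * \<tau>^2 / (k^2 - 1)^2" using tau2 k2 assms(1) by (simp add: field_simps)
  have "c \<le> (k^2 - 1) * P"
  proof -
    have "k - 1 \<le> k^2 - 1" using assms(5) by (simp add: power2_eq_square)
    thus ?thesis using assms(4,3) by (smt (verit) mult_right_mono)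
  qed
  hence c2: "c^2 \<le> ((k^2 - 1) * P)^2" using assms(2) by (intro power_mono) auto
  have "2 * n * \<tau>^2 / (k^2 - 1)^2 = 2 * n * \<tau>^2 * P^2 / ((k^2 - 1) * P)^2"
    by (subst power_mult_distrib, rule nonzero_mult_divide_mult_cancel_right[symmetric]) (use assms(3) in simp)
  also have "\<dots> \<le> 2 * n * \<tau>^2 * P^2 / c^2"
    using c2 assms(2,3) k2 by (intro divide_left_mono) auto
  also have "\<dots> = 2 * s^2 / (n * c^2)" using assms(1,2) unfolding s by (simp add: field_simps power2_eq_square)
  finally show ?thesis using e L by linarith
qed



theorem mainTheorem4:
  fixes \<epsilon> \<beta> :: real and d :: nat and R :: "nat \<Rightarrow> 'y::countable pmf" and y :: 'y
  assumes "\<epsilon> > 0" and "0 < \<beta>" and "\<beta> < 1"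
    and "even d"
    and "real d > 4 * (exp (2 * \<epsilon>) - 1)^2 * ln (2 / \<beta>)"
    and "eps_private \<epsilon> d R"
  shows "measure_pmf.prob (pmf_of_set {H. H \<subseteq> {1..d} \<and> card H = d div 2})
           {H. \<not> leaky ((exp (2 * \<epsilon>) - 1) * sqrt (4 / real d * ln (2 / \<beta>))) d H R y}
         \<ge> 1 - \<beta>"
proof -
  define L where "L = ln (2 / \<beta>)"
  define k where "k = exp \<epsilon>"
  define v where "v = (exp (2 * \<epsilon>) - 1) * sqrt (4 / real d * ln (2 / \<beta>))"
  obtain n where dn: "d = 2 * n" using assms(4) by blast
  have k1: "k > 1" using assms(1) by (simp add: k_def)
  have e2: "exp (2 * \<epsilon>) = k^2" by (simp add: k_def power2_eq_square flip: exp_add)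
  have k2: "k^2 - 1 > 0" using less_1_mult[OF k1 k1] by (simp add: power2_eq_square)
  have L0: "L > 0" using assms(2,3) by (simp add: L_def)
  have dpos: "real d > 0"
  proof -
    have "0 < 4 * (exp (2 * \<epsilon>) - 1)^2 * ln (2 / \<beta>)" using k2 L0 by (simp add: e2 L_def)
    thus ?thesis using assms(5) by linarith
  qed
  hence n0: "n > 0" using dn by simp
  define D where "D = {1..2*n}"
  define Hs where "Hs = {H. H \<subseteq> D \<and> card H = n}"
  define G where "G = {H. \<not> leaky v d H R y}"
  have Hs_eq: "{H. H \<subseteq> {1..d} \<and> card H = d div 2} = Hs" by (simp add: Hs_def D_def dn)
  have fHs: "finite Hs" unfolding Hs_def D_def
    by (rule finite_subset[rotated, OF finite_Pow_iff[THEN iffD2, of "{1..2*n}"]]) auto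
  have neHs: "Hs \<noteq> {}"
  proof -
    have "{1..n} \<in> Hs" by (auto simp: Hs_def D_def)
    thus ?thesis by blast
  qed
  have cHs: "card Hs > 0" using fHs neHs by (simp add: card_gt_0_iff)
  have meas: "measure_pmf.prob (pmf_of_set Hs) G = card (Hs \<inter> G) / card Hs"
    by (rule measure_pmf_of_set[OF neHs fHs])
  define p where "p = (\<lambda>x. pmf (R x) y)"
  define P where "P = prob_out R D y"
  have P_eq: "P = (\<Sum>x\<in>D. p x) / d" unfolding P_def p_def
    using prob_out_eq[of D R y] n0 by (simp add: D_def dn)
  have HsG: "card (Hs \<inter> G) \<ge> (1 - \<beta>) * card Hs"
  proof (cases "P > 0")
    case False
    have "\<not> leaky v d H R y" for H using False by (simp add: leaky_def P_def D_def dn)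
    hence "Hs \<inter> G = Hs" by (auto simp: G_def)
    thus ?thesis using assms(2) by (simp add: algebra_simps)
  next
    case True
    have priv: "p x \<le> k * p x'" if "x \<in> D" "x' \<in> D" for x x'
      using assms(6) that unfolding eps_private_def p_def k_def D_def dn
      by (metis measure_pmf_single)
    define mn where "mn = Min (p ` D)"
    have fD: "finite D" "D \<noteq> {}" using n0 by (auto simp: D_def)
    have "mn \<in> p ` D" unfolding mn_def using fD by (intro Min_in) auto
    then obtain x0 where x0: "x0 \<in> D" "p x0 = mn" by auto
    have mn_le: "mn \<le> p x" if "x \<in> D" for x using fD that by (simp add: mn_def)
    have mnP: "mn \<le> P"
    proof -
      have "(\<Sum>x\<in>D. mn) \<le> (\<Sum>x\<in>D. p x)" using mn_le by (rule sum_mono)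
      hence "d * mn \<le> (\<Sum>x\<in>D. p x)" by (simp add: D_def dn)
      thus ?thesis using dpos by (simp add: P_eq field_simps)
    qed
    have mn0: "mn > 0"
    proof (rule ccontr)
      assume "\<not> mn > 0"
      hence "p x \<le> 0" if "x \<in> D" for x using priv[OF that x0(1)] x0(2) k1 
        by (smt (verit) mult_nonneg_nonpos)
      hence "(\<Sum>x\<in>D. p x) \<le> 0" by (simp add: sum_nonpos)
      hence "(\<Sum>x\<in>D. p x) / d \<le> 0" using dpos by (simp add: divide_nonpos_pos)
      thus False using True by (simp add: P_eq)
    qed
    define c where "c = (k - 1) * mn"
    have c0: "c > 0" using k1 mn0 by (simp add: c_def)
    have cP: "c \<le> (k - 1) * P" using mnP k1 by (simp add: c_def)
    have pc: "\<bar>p x - p x'\<bar> \<le> c" if "x \<in> D" "x' \<in> D" for x x'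
    proof -
      have "p x \<le> k * mn" "p x' \<le> k * mn" using priv that x0 by auto
      moreover have "mn \<le> p x" "mn \<le> p x'" using mn_le that by auto
      ultimately show ?thesis by (simp add: c_def algebra_simps abs_le_iff)
    qed
    define \<tau> where "\<tau> = v / 2"
    define s where "s = n * P * \<tau>"
    define lam where "lam = 4 * s / (n * c^2)"
    have v0: "v \<ge> 0" using k2 L0 by (simp add: v_def e2 L_def)
    have v2: "v^2 = (k^2 - 1)^2 * (4 / real d * L)"
      using L0 dpos by (simp add: v_def e2 L_def power_mult_distrib)
    have v1: "v < 1"
    proof -
      have A5: "real d > 4*(k^2-1)^2*L" using assms(5) by (simp add: e2 L_def)
      have "v^2 = 4*(k^2-1)^2*L / d" using v2 by simp
      hence "v^2 < 1" using A5 dpos by (simp add: divide_less_eq)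
      thus ?thesis using v0 by (smt (verit) one_le_power)
    qed
    have tau0: "\<tau> \<ge> 0" and tau1: "\<tau> < 1/2" using v0 v1 by (auto simp: \<tau>_def)
    have tau2: "\<tau>^2 = (k^2 - 1)^2 * L / (2*n)"
      using v2 by (simp add: \<tau>_def dn power_divide field_simps)
    have lam0: "lam \<ge> 0" using True tau0 c0 by (simp add: lam_def s_def)
    have expo: "n * lam^2 * c^2/8 - lam * s \<le> - L"
      by (rule exponent_bound[OF n0 c0 True cP k1 tau0 tau2 s_def lam_def])
    have eL: "exp (- L) = \<beta> / 2" using assms(2) by (simp add: L_def exp_minus)
    have bnd: "exp (n * lam^2 * c^2/8 - lam * s) \<le> \<beta> / 2" using expo eL by (metis exp_le_cancel_iff)
    define U where "U = {H. H \<subseteq> {1..2*n} \<and> card H = n \<and> (\<Sum>x\<in>H. p x) \<ge> (\<Sum>x\<in>{1..2*n}. p x)/2 + s}"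
    define W where "W = {H. H \<subseteq> {1..2*n} \<and> card H = n \<and> (\<Sum>x\<in>H. - p x) \<ge> (\<Sum>x\<in>{1..2*n}. - p x)/2 + s}"
    have cU: "real (card U) \<le> card Hs * (\<beta> / 2)"
    proof -
      have "real (card U) \<le> card Hs * exp (n * lam^2 * c^2/8 - lam * s)"
        unfolding U_def Hs_def D_def by (rule tail_half[OF lam0]) (use pc in \<open>auto simp: D_def\<close>)
      also have "\<dots> \<le> card Hs * (\<beta> / 2)" using bnd by (intro mult_left_mono) auto
      finally show ?thesis .
    qed
    have cW: "real (card W) \<le> card Hs * (\<beta> / 2)"
    proof -
      have "real (card W) \<le> card Hs * exp (n * lam^2 * c^2/8 - lam * s)"
        unfolding W_def Hs_def D_def by (rule tail_half[OF lam0]) (use pc in \<open>auto simp: D_def\<close>)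
      also have "\<dots> \<le> card Hs * (\<beta> / 2)" using bnd by (intro mult_left_mono) auto
      finally show ?thesis .
    qed
    have sub: "Hs \<subseteq> (Hs \<inter> G) \<union> U \<union> W"
    proof
      fix H assume H: "H \<in> Hs"
      show "H \<in> (Hs \<inter> G) \<union> U \<union> W"
      proof (cases "H \<in> U \<union> W")
        case False
        have HD: "H \<subseteq> D" "card H = n" using H by (auto simp: Hs_def)
        have fH: "finite H" "H \<noteq> {}" using HD n0 fD finite_subset by auto
        have tot: "(\<Sum>x\<in>D. p x) = 2 * n * P" using P_eq dpos by (simp add: dn)
        have "\<not> (\<Sum>x\<in>H. p x) \<ge> (\<Sum>x\<in>D. p x)/2 + s" using False HD by (auto simp: U_def D_def)
        hence a1: "(\<Sum>x\<in>H. p x) < n * P + s" using tot by simp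
        have "\<not> (\<Sum>x\<in>H. - p x) \<ge> (\<Sum>x\<in>D. - p x)/2 + s" using False HD by (auto simp: W_def D_def)
        hence a2: "(\<Sum>x\<in>H. p x) > n * P - s" using tot by (simp add: sum_negf)
        define r where "r = (\<Sum>x\<in>H. p x) / (n * P)"
        have "\<bar>r - 1\<bar> < \<tau>"
        proof -
          have nP: "n * P > 0" using n0 True by simp
          have "r - 1 = ((\<Sum>x\<in>H. p x) - n * P) / (n * P)" using nP n0 True by (simp add: r_def diff_divide_distrib)
          moreover have "\<bar>(\<Sum>x\<in>H. p x) - n * P\<bar> < n * P * \<tau>" using a1 a2 by (simp add: s_def abs_less_iff)
          ultimately show ?thesis using nP by (simp add: abs_div pos_divide_less_eq mult.commute)
        qed
        from ln_bound[OF tau0 tau1 this] have rb: "r > 0" "\<bar>ln r\<bar> \<le> v" by (auto simp: \<tau>_def)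
        have Q: "prob_out R H y = (\<Sum>x\<in>H. p x) / n" using prob_out_eq[OF fH, of R y] HD by (simp add: p_def)
        have QP: "prob_out R H y / prob_out R {1..d} y = r"
          using Q True by (simp add: r_def P_def D_def dn)
        have "prob_out R H y \<noteq> 0" using QP rb by auto
        hence "\<not> leaky v d H R y" using QP rb by (simp add: leaky_def)
        thus ?thesis using H by (simp add: G_def)
      qed auto
    qed
    have fU: "finite U" "finite W"
      by (rule finite_subset[rotated, OF finite_Pow_iff[THEN iffD2, of "{1..2*n}"]], auto simp: U_def W_def)+
    have "card Hs \<le> card ((Hs \<inter> G) \<union> U \<union> W)" using sub fHs fU by (intro card_mono) auto
    also have "\<dots> \<le> card (Hs \<inter> G) + card U + card W"
      by (meson add_le_mono card_Un_le le_refl order_trans)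
    finally have "real (card Hs) \<le> card (Hs \<inter> G) + card U + card W" by linarith
    thus ?thesis using cU cW by (simp add: algebra_simps)
  qed
  have "1 - \<beta> \<le> card (Hs \<inter> G) / card Hs" using HsG cHs by (simp add: field_simps)
  thus ?thesis using meas Hs_eq by (simp add: G_def v_def)
qed

end
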